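(* In the setting described in the context, with the Poisson tensors $\pi_s$, $s=0,\dots,\alpha$, and the notation $h^{(k)}_j:=c^{(k)}_{1-j}$ for $j=0,-1,\dots,-\alpha+1$, for each $k\in\{1,\dots,m\}$ and each pair $0\le i<j\le\alpha$ one has the bi-Hamiltonian chain $$\pi_i\,dh^{(k)}_{-i}=0,\qquad \pi_i\,dh^{(k)}_{-i+r}=X^{(k)}_r=\pi_j\,dh^{(k)}_{-j+r}\ \ (r=1,\dots,n_k),\qquad \pi_j\,dh^{(k)}_{-j+n_k+1}=0.$$ In particular, for each $k$ there are $\binom{\alpha+1}{2}$ such bi-Hamiltonian chains.
   Context: Let $n,m\ge1$, $n_1,\dots,n_m\ge1$ integers with $n_1+\dots+n_m=n$, and $\alpha$ an integer with $1\le\alpha\le\min_k n_k$; set $N=\alpha m$. Let $\varphi_0,\varphi_1,\dots,\varphi_m$ be smooth functions of $(\lambda,\mu)$ with $\varphi_m\equiv1$. Consider the curve $$\varphi_0(\lambda,\mu)+\sum_{k=1}^m\varphi_k(\lambda,\mu)\,\psi_k(\lambda)=0,\qquad \psi_k(\lambda)=c^{(k)}_\alpha\lambda^{n_k-1+\alpha}+\dots+c^{(k)}_1\lambda^{n_k}+\sum_{i=1}^{n_k}a^{(k)}_i\lambda^{n_k-i}.$$ Taking $n$ copies with $(\lambda,\mu)$ replaced by $(\lambda_j,\mu_j)$, $j=1,\dots,n$, and solving (assumed possible on an open domain, with nondegenerate Jacobian) for the $a^{(k)}_i$ gives $a^{(k)}_i=h^{(k)}_i(\boldsymbol\lambda,\boldsymbol\mu,\mathbf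 c)$ on an open set $\mathcal M\subset\mathbb{R}^{2n+N}$ with coordinates $(\boldsymbol\lambda,\boldsymbol\mu,\mathbf c)$, $\mathbf c=(c^{(k)}_j)_{k\le m,\,j\le\alpha}$. Set $\pi_0=\sum_{i=1}^n\partial_{\lambda_i}\wedge\partial_{\mu_i}$, $X^{(k)}_i=\pi_0\,dh^{(k)}_i$, and for $s=0,\dots,\alpha$ $$\pi_s=\sum_{i=1}^n\lambda_i^s\frac{\partial}{\partial\lambda_i}\wedge\frac{\partial}{\partial\mu_i}+\sum_{k=1}^m\sum_{j=1}^s X^{(k)}_j\wedge\frac{\partial}{\partial c^{(k)}_{s-j+1}}.$$ *)

theory Defs
  imports "HOL-Analysis.Analysis"
begin

(* Coordinates on R^{2n+N}: Lam i = lambda_i, Mu i = mu_i, Cc k j = c^{(k)}_j.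
   A point is a function coord => real; only the coordinates in coords n m alpha matter,
   all others are required to be 0 on the domain M (see coord_open). *)
datatype coord = Lam nat | Mu nat | Cc nat nat

type_synonym point = "coord \<Rightarrow> real"

definition coords :: "nat \<Rightarrow> nat \<Rightarrow> nat \<Rightarrow> coord set" where
  "coords n m \<alpha> = Lam ` {1..n} \<union> Mu ` {1..n} \<union> {Cc k j | k j. k \<in> {1..m} \<and> j \<in> {1..\<alpha>}}"

(* the coordinate slice  {p. p x = 0 outside V}, identified with R^{card V} *)
definition slice :: "'c set \<Rightarrow> ('c \<Rightarrow> real) set" where
  "slice V = {p. \<forall>x. x \<notin> V \<longrightarrow> p x = 0}"

(* M is an open subset of the coordinate space R^V (product = Euclidean topology) *)
definition coord_open :: "'c set \<Rightarrow> ('c \<Rightarrow> real) set \<Rightarrow> bool" where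
  "coord_open V M \<longleftrightarrow> (\<exists>U. open U \<and> M = U \<inter> slice V)"

definition pd :: "'c \<Rightarrow> (('c \<Rightarrow> real) \<Rightarrow> real) \<Rightarrow> ('c \<Rightarrow> real) \<Rightarrow> real" where
  "pd x f p = deriv (\<lambda>t. f (p(x := t))) (p x)"

fun ipd :: "'c list \<Rightarrow> (('c \<Rightarrow> real) \<Rightarrow> real) \<Rightarrow> ('c \<Rightarrow> real) \<Rightarrow> real" where
  "ipd [] f = f"
| "ipd (x # xs) f = pd x (ipd xs f)"

definition smooth_on :: "'c set \<Rightarrow> ('c \<Rightarrow> real) set \<Rightarrow> (('c \<Rightarrow> real) \<Rightarrow> real) \<Rightarrow> bool" where
  "smooth_on V S f \<longleftrightarrow>
     (\<forall>xs. set xs \<subseteq> V \<longrightarrow> continuous_on S (ipd xs f) \<and>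
        (\<forall>x\<in>V. \<forall>p\<in>S. (\<lambda>t. ipd xs f (p(x := t))) differentiable (at (p x))))"

(* smooth function of (lambda, mu) on R^2 (coordinates: True = lambda, False = mu) *)
definition smooth2 :: "(real \<Rightarrow> real \<Rightarrow> real) \<Rightarrow> bool" where
  "smooth2 g \<longleftrightarrow> smooth_on (UNIV :: bool set) UNIV (\<lambda>p. g (p True) (p False))"

type_synonym vfield = "coord \<Rightarrow> point \<Rightarrow> real"
type_synonym bivector = "coord \<Rightarrow> coord \<Rightarrow> point \<Rightarrow> real"

definition basis :: "coord \<Rightarrow> vfield" where
  "basis x = (\<lambda>y p. if y = x then 1 else 0)"

definition wedge :: "vfield \<Rightarrow> vfield \<Rightarrow> bivector" where
  "wedge u v = (\<lambda>x y p. u x p * v y p - u y p * v x p)"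

definition contr :: "coord set \<Rightarrow> bivector \<Rightarrow> (point \<Rightarrow> real) \<Rightarrow> vfield" where
  "contr V P f = (\<lambda>x p. \<Sum>y\<in>V. P x y p * pd y f p)"

definition psi :: "nat \<Rightarrow> nat \<Rightarrow> (nat \<Rightarrow> real) \<Rightarrow> (nat \<Rightarrow> real) \<Rightarrow> real \<Rightarrow> real" where
  "psi nk \<alpha> c a l = (\<Sum>j=1..\<alpha>. c j * l ^ (nk - 1 + j)) + (\<Sum>i=1..nk. a i * l ^ (nk - i))"

definition pi0 :: "nat \<Rightarrow> bivector" where
  "pi0 n = (\<lambda>x y p. \<Sum>i=1..n. wedge (basis (Lam i)) (basis (Mu i)) x y p)"

definition Xf :: "coord set \<Rightarrow> nat \<Rightarrow> (nat \<Rightarrow> nat \<Rightarrow> point \<Rightarrow> real) \<Rightarrow> nat \<Rightarrow> nat \<Rightarrow> vfield" where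
  "Xf V n h k i = contr V (pi0 n) (h k i)"

definition pis :: "coord set \<Rightarrow> nat \<Rightarrow> nat \<Rightarrow> (nat \<Rightarrow> nat \<Rightarrow> point \<Rightarrow> real) \<Rightarrow> nat \<Rightarrow> bivector" where
  "pis V n m h s = (\<lambda>x y p.
      (\<Sum>i=1..n. (p (Lam i)) ^ s * wedge (basis (Lam i)) (basis (Mu i)) x y p)
    + (\<Sum>k=1..m. \<Sum>j=1..s. wedge (Xf V n h k j) (basis (Cc k (s - j + 1))) x y p))"

definition Hext :: "(nat \<Rightarrow> nat \<Rightarrow> point \<Rightarrow> real) \<Rightarrow> nat \<Rightarrow> int \<Rightarrow> point \<Rightarrow> real" where
  "Hext h k j = (if j \<le> 0 then (\<lambda>p. p (Cc k (nat (1 - j)))) else h k (nat j))"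

end

theory Submission
  imports Defs
begin

lemma line_in_M:
  assumes "coord_open V M" "p \<in> M" "z \<in> V"
  shows "\<forall>\<^sub>F \<tau> in nhds (p z). p(z:=\<tau>) \<in> M"
proof -
  obtain U where U: "open U" "M = U \<inter> slice V" using assms(1) unfolding coord_open_def by blast
  have c: "continuous_on UNIV (\<lambda>\<tau>::real. p(z:=\<tau>))"
    apply (rule continuous_on_coordinatewise_then_product)
    subgoal for i by (cases "i = z") (auto intro: continuous_intros)
    done
  have o: "open ((\<lambda>\<tau>. p(z:=\<tau>)) -` U)" by (rule open_vimage[OF U(1) c])
  have "p z \<in> (\<lambda>\<tau>. p(z:=\<tau>)) -` U" using assms U by auto
  then have "\<forall>\<^sub>F \<tau> in nhds (p z). \<tau> \<in> (\<lambda>\<tau>. p(z:=\<tau>)) -` U"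
    using o eventually_nhds_in_open by blast
  then show ?thesis
    by eventually_elim (use assms U in \<open>auto simp: slice_def\<close>)
qed

lemma L1:
  fixes \<phi> :: "nat \<Rightarrow> real \<Rightarrow> real \<Rightarrow> real" and h :: "nat \<Rightarrow> nat \<Rightarrow> point \<Rightarrow> real"
  assumes M_open: "coord_open V M" and p: "p \<in> M" and z: "z \<in> V"
    and zt: "z \<noteq> Lam t" "z \<noteq> Mu t"
    and hd: "\<forall>k\<in>{1..m}. \<forall>i\<in>{1..nk k}. (\<lambda>\<tau>. h k i (p(z:=\<tau>))) differentiable (at (p z))"
    and curve: "\<forall>q\<in>M. \<phi> 0 (q (Lam t)) (q (Mu t)) + (\<Sum>k=1..m. \<phi> k (q (Lam t)) (q (Mu t)) *
             psi (nk k) \<alpha> (\<lambda>i. q (Cc k i)) (\<lambda>i. h k i q) (q (Lam t))) = 0"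
  shows "(\<Sum>k=1..m. \<phi> k (p (Lam t)) (p (Mu t)) * ((\<Sum>j=1..\<alpha>. (if z = Cc k j then 1 else 0) * p (Lam t) ^ (nk k - 1 + j))
            + (\<Sum>i=1..nk k. pd z (h k i) p * p (Lam t) ^ (nk k - i)))) = 0"
proof -
  define L where "L = p (Lam t)"
  define U where "U = p (Mu t)"
  define F where "F \<tau> = \<phi> 0 L U + (\<Sum>k=1..m. \<phi> k L U * ((\<Sum>j=1..\<alpha>. (p(z:=\<tau>)) (Cc k j) * L^(nk k - 1 + j))
      + (\<Sum>i=1..nk k. h k i (p(z:=\<tau>)) * L^(nk k - i))))" for \<tau>
  have ev: "\<forall>\<^sub>F \<tau> in nhds (p z). F \<tau> = 0"
    using line_in_M[OF M_open p z]
  proof eventually_elim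
    case (elim \<tau>)
    from curve[rule_format, OF elim] show ?case
      using zt unfolding F_def L_def U_def psi_def by simp
  qed
  have hd': "((\<lambda>\<tau>. h k i (p(z:=\<tau>))) has_real_derivative pd z (h k i) p) (at (p z))"
    if "k \<in> {1..m}" "i \<in> {1..nk k}" for k i
    using hd that DERIV_deriv_iff_real_differentiable unfolding pd_def by fastforce
  have cd: "((\<lambda>\<tau>. (p(z:=\<tau>)) (Cc k j) * L^e) has_real_derivative (if z = Cc k j then 1 else 0) * L^e) (at (p z))"
    for k j e
    by (cases "z = Cc k j") (auto intro!: derivative_eq_intros)
  have "(F has_real_derivative (\<Sum>k=1..m. \<phi> k L U * ((\<Sum>j=1..\<alpha>. (if z = Cc k j then 1 else 0) * L ^ (nk k - 1 + j))
            + (\<Sum>i=1..nk k. pd z (h k i) p * L ^ (nk k - i))))) (at (p z))"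
  proof -
    have s: "((\<lambda>\<tau>. \<phi> k L U * ((\<Sum>j=1..\<alpha>. (p(z:=\<tau>)) (Cc k j) * L^(nk k - 1 + j))
      + (\<Sum>i=1..nk k. h k i (p(z:=\<tau>)) * L^(nk k - i)))) has_real_derivative
      \<phi> k L U * ((\<Sum>j=1..\<alpha>. (if z = Cc k j then 1 else 0) * L ^ (nk k - 1 + j))
            + (\<Sum>i=1..nk k. pd z (h k i) p * L ^ (nk k - i)))) (at (p z))" if k: "k \<in> {1..m}" for k
      by (intro DERIV_cmult DERIV_add DERIV_sum cd DERIV_cmult_right hd' k)
    have S: "((\<lambda>\<tau>. \<Sum>k=1..m. \<phi> k L U * ((\<Sum>j=1..\<alpha>. (p(z:=\<tau>)) (Cc k j) * L^(nk k - 1 + j))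
      + (\<Sum>i=1..nk k. h k i (p(z:=\<tau>)) * L^(nk k - i)))) has_real_derivative
      (\<Sum>k=1..m. \<phi> k L U * ((\<Sum>j=1..\<alpha>. (if z = Cc k j then 1 else 0) * L ^ (nk k - 1 + j))
            + (\<Sum>i=1..nk k. pd z (h k i) p * L ^ (nk k - i))))) (at (p z))"
      by (rule DERIV_sum, rule s, simp)
    have "((\<lambda>\<tau>. \<phi> 0 L U + (\<Sum>k=1..m. \<phi> k L U * ((\<Sum>j=1..\<alpha>. (p(z:=\<tau>)) (Cc k j) * L^(nk k - 1 + j))
      + (\<Sum>i=1..nk k. h k i (p(z:=\<tau>)) * L^(nk k - i))))) has_real_derivative
      0 + (\<Sum>k=1..m. \<phi> k L U * ((\<Sum>j=1..\<alpha>. (if z = Cc k j then 1 else 0) * L ^ (nk k - 1 + j))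
            + (\<Sum>i=1..nk k. pd z (h k i) p * L ^ (nk k - i))))) (at (p z))"
      by (rule DERIV_add[OF DERIV_const S])
    then show ?thesis unfolding F_def[abs_def] by simp
  qed
  moreover have "(F has_real_derivative 0) (at (p z))"
    using DERIV_cong_ev[OF refl ev refl, of 0] by simp
  ultimately show ?thesis using DERIV_unique L_def U_def by blast
qed


lemma coords_mem[simp]:
  "Lam l \<in> coords n m \<alpha> \<longleftrightarrow> l \<in> {1..n}"
  "Mu l \<in> coords n m \<alpha> \<longleftrightarrow> l \<in> {1..n}"
  "Cc k q \<in> coords n m \<alpha> \<longleftrightarrow> k \<in> {1..m} \<and> q \<in> {1..\<alpha>}"
  by (auto simp: coords_def)

lemma coords_finite[simp]: "finite (coords n m \<alpha>)"
proof -
  have "{Cc k j | k j. k \<in> {1..m} \<and> j \<in> {1..\<alpha>}} = (\<lambda>(k,j). Cc k j) ` ({1..m} \<times> {1..\<alpha>})" by auto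
  then show ?thesis unfolding coords_def by simp
qed

lemma ite_simps:
  "(if P then 1 else 0) * (x::real) = (if P then x else 0)"
  "x * (if P then 1 else 0) = (if P then x else 0)"
  "(if P then x else 0) * y = (if P then x * y else 0)"
  "y * (if P then x else 0) = (if P then y * x else 0)"
  "(if P then x else 0) - (if Q then z else 0) = (if P then x else 0) + (if Q then -z else 0)"
  by auto

lemma contr_pi0:
  "contr (coords n m \<alpha>) (pi0 n) f x p =
    (\<Sum>i=1..n. (if x = Lam i then pd (Mu i) f p else 0) - (if x = Mu i then pd (Lam i) f p else 0))"
  unfolding contr_def pi0_def wedge_def basis_def
  apply (simp add: sum_distrib_right)
  apply (subst sum.swap)
  apply (rule sum.cong[OF refl])
  apply (simp add: ite_simps sum.distrib distrib_right sum.delta sum.delta' sum_negf)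
  done

lemma contr_add: "contr V (\<lambda>x y p. A x y p + B x y p) f x p = contr V A f x p + contr V B f x p"
  unfolding contr_def by (simp add: distrib_right sum.distrib)

lemma contr_pis:
  assumes "s \<le> \<alpha>"
  shows "contr (coords n m \<alpha>) (pis (coords n m \<alpha>) n m h s) f x p =
 (\<Sum>i=1..n. p (Lam i)^s * ((if x = Lam i then pd (Mu i) f p else 0) - (if x = Mu i then pd (Lam i) f p else 0)))
 + (\<Sum>k=1..m. \<Sum>j=1..s. Xf (coords n m \<alpha>) n h k j x p * pd (Cc k (s-j+1)) f p
     - (if x = Cc k (s-j+1) then (\<Sum>y\<in>coords n m \<alpha>. Xf (coords n m \<alpha>) n h k j y p * pd y f p) else 0))"
proof -
  let ?V = "coords n m \<alpha>"
  have A: "contr ?V (\<lambda>x y p. \<Sum>i=1..n. (p (Lam i)) ^ s * wedge (basis (Lam i)) (basis (Mu i)) x y p) f x p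
     = (\<Sum>i=1..n. p (Lam i)^s * ((if x = Lam i then pd (Mu i) f p else 0) - (if x = Mu i then pd (Lam i) f p else 0)))"
    unfolding contr_def wedge_def basis_def
    apply (simp add: sum_distrib_right)
    apply (subst sum.swap)
    apply (rule sum.cong[OF refl])
    apply (simp add: ite_simps sum.distrib distrib_right distrib_left sum.delta sum.delta' sum_negf
        flip: sum_distrib_left)
    done
  have B: "contr ?V (\<lambda>x y p. \<Sum>k=1..m. \<Sum>j=1..s. wedge (Xf ?V n h k j) (basis (Cc k (s - j + 1))) x y p) f x p
     = (\<Sum>k=1..m. \<Sum>j=1..s. Xf (coords n m \<alpha>) n h k j x p * pd (Cc k (s-j+1)) f p
     - (if x = Cc k (s-j+1) then (\<Sum>y\<in>coords n m \<alpha>. Xf (coords n m \<alpha>) n h k j y p * pd y f p) else 0))"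
    unfolding contr_def sum_distrib_right
    apply (subst sum.swap[where A="coords n m \<alpha>"])
    apply (rule sum.cong[OF refl])
    apply (subst sum.swap[where A="coords n m \<alpha>"])
    apply (rule sum.cong[OF refl])
    using assms
    apply (auto simp add: wedge_def basis_def ite_simps left_diff_distrib sum_subtractf sum.delta sum.delta'
        sum_distrib_left)
    done
  show ?thesis unfolding pis_def contr_add A B ..
qed

lemma pd_coord: "pd y (\<lambda>q. q c) p = (if y = c then 1 else 0)"
  unfolding pd_def by (cases "y = c") auto

lemma Xf_Lam: "Xf (coords n m \<alpha>) n h k j (Lam l) p = (if l \<in> {1..n} then pd (Mu l) (h k j) p else 0)"
  unfolding Xf_def contr_pi0 by (simp add: sum.delta sum.delta')
lemma Xf_Mu: "Xf (coords n m \<alpha>) n h k j (Mu l) p = (if l \<in> {1..n} then - pd (Lam l) (h k j) p else 0)"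
  unfolding Xf_def contr_pi0 by (simp add: sum.delta sum.delta' sum_negf)
lemma Xf_Cc: "Xf (coords n m \<alpha>) n h k j (Cc a b) p = 0"
  unfolding Xf_def contr_pi0 by simp

lemma Xf_pairing:
  "(\<Sum>y\<in>coords n m \<alpha>. Xf (coords n m \<alpha>) n h k j y p * pd y f p) =
   (\<Sum>l=1..n. pd (Mu l) (h k j) p * pd (Lam l) f p - pd (Lam l) (h k j) p * pd (Mu l) f p)"
  unfolding Xf_def contr_pi0 sum_distrib_right
  apply (subst sum.swap)
  apply (rule sum.cong[OF refl])
  apply (simp add: ite_simps sum.distrib distrib_right sum.delta sum.delta' sum_negf)
  done

lemma reindex:
  fixes D :: "nat \<Rightarrow> real"
  assumes "i \<le> N"
  shows "(\<Sum>j=1..i. D j * L^(N+i-j)) + (\<Sum>s=1..N. (if s+i \<le> N then D (s+i) else 0) * L^(N-s))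
     = L^i * (\<Sum>s=1..N. D s * L^(N-s))"
proof -
  have split: "{1..N} = {1..i} \<union> {i+1..N}" using assms by auto
  have "L^i * (\<Sum>s=1..N. D s * L^(N-s)) = (\<Sum>s=1..N. D s * L^(N+i-s))"
    unfolding sum_distrib_left
  proof (intro sum.cong refl)
    fix s assume "s \<in> {1..N}"
    then have "N+i-s = i + (N-s)" by simp
    then show "L^i * (D s * L^(N-s)) = D s * L^(N+i-s)" by (simp add: power_add)
  qed
  also have "\<dots> = (\<Sum>s=1..i. D s * L^(N+i-s)) + (\<Sum>s=i+1..N. D s * L^(N+i-s))"
    unfolding split by (rule sum.union_disjoint) auto
  also have "(\<Sum>s=i+1..N. D s * L^(N+i-s)) = (\<Sum>s=1..N-i. D (s+i) * L^(N-s))"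
  proof -
    have "(\<Sum>s=i+1..N. D s * L^(N+i-s)) = (\<Sum>s\<in>(\<lambda>s. s+i) ` {1..N-i}. D s * L^(N+i-s))"
      using assms by (intro sum.cong) (auto simp: image_iff intro!: bexI[where x="_ - i"])
    also have "\<dots> = (\<Sum>s=1..N-i. D (s+i) * L^(N-s))"
      by (subst sum.reindex) (auto simp: inj_on_def)
    finally show ?thesis .
  qed
  also have "(\<Sum>s=1..N-i. D (s+i) * L^(N-s)) = (\<Sum>s=1..N. (if s+i \<le> N then D (s+i) else 0) * L^(N-s))"
  proof -
    have "{1..N} = {1..N-i} \<union> {N-i+1..N}" using assms by auto
    then have "(\<Sum>s=1..N. (if s+i \<le> N then D (s+i) else 0) * L^(N-s)) =
        (\<Sum>s=1..N-i. (if s+i \<le> N then D (s+i) else 0) * L^(N-s)) + (\<Sum>s=N-i+1..N. (if s+i \<le> N then D (s+i) else 0) * L^(N-s))"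
      by (simp add: sum.union_disjoint)
    also have "(\<Sum>s=N-i+1..N. (if s+i \<le> N then D (s+i) else 0) * L^(N-s)) = 0"
      by (intro sum.neutral) auto
    also have "(\<Sum>s=1..N-i. (if s+i \<le> N then D (s+i) else 0) * L^(N-s)) = (\<Sum>s=1..N-i. D (s+i) * L^(N-s))"
      by (intro sum.cong) auto
    finally show ?thesis by simp
  qed
  finally show ?thesis by simp
qed



lemma sum3_swap: "(\<Sum>s\<in>A. \<Sum>a\<in>B. \<Sum>b\<in>C. g s a b) = (\<Sum>a\<in>B. \<Sum>b\<in>C. \<Sum>s\<in>A. g s a b)"
proof -
  have "(\<Sum>s\<in>A. \<Sum>a\<in>B. \<Sum>b\<in>C. g s a b) = (\<Sum>a\<in>B. \<Sum>s\<in>A. \<Sum>b\<in>C. g s a b)"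
    by (rule sum.swap)
  also have "\<dots> = (\<Sum>a\<in>B. \<Sum>b\<in>C. \<Sum>s\<in>A. g s a b)"
    by (rule sum.cong[OF refl], rule sum.swap)
  finally show ?thesis .
qed

context
  fixes n m \<alpha> :: nat and nk :: "nat \<Rightarrow> nat" and \<phi> :: "nat \<Rightarrow> real \<Rightarrow> real \<Rightarrow> real"
    and h :: "nat \<Rightarrow> nat \<Rightarrow> point \<Rightarrow> real" and M :: "point set"
  assumes alpha: "\<forall>k\<in>{1..m}. \<alpha> \<le> nk k"
    and M_open: "coord_open (coords n m \<alpha>) M"
    and h_smooth: "\<forall>k\<in>{1..m}. \<forall>i\<in>{1..nk k}. smooth_on (coords n m \<alpha>) M (h k i)"
    and curve: "\<forall>p\<in>M. \<forall>j\<in>{1..n}.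
        \<phi> 0 (p (Lam j)) (p (Mu j))
        + (\<Sum>k=1..m. \<phi> k (p (Lam j)) (p (Mu j)) *
             psi (nk k) \<alpha> (\<lambda>i. p (Cc k i)) (\<lambda>i. h k i p) (p (Lam j))) = 0"
    and nondeg: "\<forall>p\<in>M. \<forall>v :: nat \<Rightarrow> nat \<Rightarrow> real.
        (\<forall>j\<in>{1..n}. (\<Sum>k=1..m. \<phi> k (p (Lam j)) (p (Mu j)) *
             (\<Sum>i=1..nk k. v k i * (p (Lam j)) ^ (nk k - i))) = 0)
        \<longrightarrow> (\<forall>k\<in>{1..m}. \<forall>i\<in>{1..nk k}. v k i = 0)"
begin

lemma hdiff:
  assumes "p \<in> M" "z \<in> coords n m \<alpha>" "k \<in> {1..m}" "i \<in> {1..nk k}"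
  shows "(\<lambda>\<tau>. h k i (p(z:=\<tau>))) differentiable (at (p z))"
proof -
  have "smooth_on (coords n m \<alpha>) M (h k i)" using h_smooth assms by blast
  then show ?thesis unfolding smooth_on_def using assms
    by (metis empty_set empty_subsetI ipd.simps(1))
qed

lemma L1c:
  assumes p: "p \<in> M" and z: "z \<in> coords n m \<alpha>" and t: "t \<in> {1..n}" and zt: "z \<noteq> Lam t" "z \<noteq> Mu t"
  shows "(\<Sum>k=1..m. \<phi> k (p (Lam t)) (p (Mu t)) * ((\<Sum>j=1..\<alpha>. (if z = Cc k j then 1 else 0) * p (Lam t) ^ (nk k - 1 + j))
            + (\<Sum>i=1..nk k. pd z (h k i) p * p (Lam t) ^ (nk k - i)))) = 0"
  by (rule L1[OF M_open p z zt]) (use hdiff p z curve t in auto)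

lemma W_zero:
  assumes p: "p \<in> M" and l: "l \<in> {1..n}" and z: "z = Lam l \<or> z = Mu l" and t: "t \<in> {1..n}" "t \<noteq> l"
  shows "(\<Sum>k=1..m. \<phi> k (p (Lam t)) (p (Mu t)) * (\<Sum>i=1..nk k. pd z (h k i) p * p (Lam t) ^ (nk k - i))) = 0"
  using L1c[OF p _ t(1), of z] z l t by auto

lemma Cderiv:
  assumes p: "p \<in> M" and t: "t \<in> {1..n}" and k': "k' \<in> {1..m}" and q: "q \<in> {1..\<alpha>}"
  shows "(\<Sum>k=1..m. \<phi> k (p (Lam t)) (p (Mu t)) * (\<Sum>i=1..nk k. pd (Cc k' q) (h k i) p * p (Lam t) ^ (nk k - i)))
     = - (\<phi> k' (p (Lam t)) (p (Mu t)) * p (Lam t) ^ (nk k' - 1 + q))"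
proof -
  let ?f = "\<lambda>k. \<phi> k (p (Lam t)) (p (Mu t))" and ?L = "p (Lam t)"
  have 0: "(\<Sum>k=1..m. ?f k * ((\<Sum>j=1..\<alpha>. (if Cc k' q = Cc k j then 1 else 0) * ?L ^ (nk k - 1 + j))
            + (\<Sum>i=1..nk k. pd (Cc k' q) (h k i) p * ?L ^ (nk k - i)))) = 0"
    using L1c[OF p _ t, of "Cc k' q"] k' q by auto
  have d: "(\<Sum>j=1..\<alpha>. (if Cc k' q = Cc k j then 1 else 0) * ?L ^ (nk k - 1 + j)) =
      (if k = k' then ?L ^ (nk k' - 1 + q) else 0)" for k
    using q by (auto simp: ite_simps sum.delta)
  have "(\<Sum>k=1..m. ?f k * (if k = k' then ?L ^ (nk k' - 1 + q) else 0)) = ?f k' * ?L ^ (nk k' - 1 + q)"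
    using k' by (simp add: ite_simps sum.delta')
  then show ?thesis using 0 unfolding d distrib_left sum.distrib by linarith
qed

lemma chain:
  assumes p: "p \<in> M" and l: "l \<in> {1..n}" and z: "z = Lam l \<or> z = Mu l" and i: "i \<le> \<alpha>"
    and k: "k \<in> {1..m}" and s: "s \<in> {1..nk k}"
  shows "p (Lam l)^i * pd z (h k s) p + (\<Sum>k'=1..m. \<Sum>j=1..i. pd z (h k' j) p * pd (Cc k' (i-j+1)) (h k s) p)
     = (if s+i \<le> nk k then pd z (h k (s+i)) p else 0)"
proof -
  define D where "D k s = pd z (h k s) p" for k s
  define C where "C k' q k s = pd (Cc k' q) (h k s) p" for k' q k s
  define R where "R k s = (if s+i \<le> nk k then D k (s+i) else 0)" for k s
  define v where "v k s = p (Lam l)^i * D k s + (\<Sum>k'=1..m. \<Sum>j=1..i. D k' j * C k' (i-j+1) k s) - R k s" for k s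
  have "\<forall>t\<in>{1..n}. (\<Sum>k=1..m. \<phi> k (p (Lam t)) (p (Mu t)) * (\<Sum>s=1..nk k. v k s * p (Lam t)^(nk k - s))) = 0"
  proof
    fix t assume t: "t \<in> {1..n}"
    define L where "L = p (Lam t)"
    define f where "f k = \<phi> k (p (Lam t)) (p (Mu t))" for k
    define W where "W k = (\<Sum>s=1..nk k. D k s * L^(nk k - s))" for k
    define Ll where "Ll = p (Lam l)"
    have Wz: "(Ll^i - L^i) * (\<Sum>k=1..m. f k * W k) = 0"
    proof (cases "t = l")
      case True then show ?thesis by (simp add: L_def Ll_def)
    next
      case False
      then show ?thesis using W_zero[OF p l z t] unfolding f_def W_def D_def L_def by simp
    qed
    have midC: "(\<Sum>k=1..m. f k * (\<Sum>s=1..nk k. C k' (i-j+1) k s * L^(nk k - s))) = - (f k' * L^(nk k' + i - j))"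
      if k': "k' \<in> {1..m}" and j: "j \<in> {1..i}" for k' j
    proof -
      have "\<alpha> \<le> nk k'" using alpha k' by blast
      then have e: "nk k' - 1 + (i - j + 1) = nk k' + i - j" using j i by auto
      have q: "i-j+1 \<in> {1..\<alpha>}" using j i by auto
      show ?thesis using Cderiv[OF p t k' q] unfolding f_def C_def L_def e .
    qed
    have mid: "(\<Sum>k=1..m. f k * (\<Sum>s=1..nk k. (\<Sum>k'=1..m. \<Sum>j=1..i. D k' j * C k' (i-j+1) k s) * L^(nk k - s)))
      = (\<Sum>k'=1..m. \<Sum>j=1..i. D k' j * (\<Sum>k=1..m. f k * (\<Sum>s=1..nk k. C k' (i-j+1) k s * L^(nk k - s))))"
    proof -
      have "(\<Sum>k=1..m. f k * (\<Sum>s=1..nk k. (\<Sum>k'=1..m. \<Sum>j=1..i. D k' j * C k' (i-j+1) k s) * L^(nk k - s)))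
        = (\<Sum>k=1..m. \<Sum>k'=1..m. \<Sum>j=1..i. \<Sum>s=1..nk k. D k' j * (f k * (C k' (i-j+1) k s * L^(nk k - s))))"
      proof (rule sum.cong[OF refl])
        fix k assume "k \<in> {1..m}"
        have "f k * (\<Sum>s=1..nk k. (\<Sum>k'=1..m. \<Sum>j=1..i. D k' j * C k' (i-j+1) k s) * L^(nk k - s))
          = (\<Sum>s=1..nk k. \<Sum>k'=1..m. \<Sum>j=1..i. D k' j * (f k * (C k' (i-j+1) k s * L^(nk k - s))))"
          by (simp add: sum_distrib_left sum_distrib_right mult_ac)
        also have "\<dots> = (\<Sum>k'=1..m. \<Sum>j=1..i. \<Sum>s=1..nk k. D k' j * (f k * (C k' (i-j+1) k s * L^(nk k - s))))"
          by (rule sum3_swap)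
        finally show "f k * (\<Sum>s=1..nk k. (\<Sum>k'=1..m. \<Sum>j=1..i. D k' j * C k' (i-j+1) k s) * L^(nk k - s))
          = (\<Sum>k'=1..m. \<Sum>j=1..i. \<Sum>s=1..nk k. D k' j * (f k * (C k' (i-j+1) k s * L^(nk k - s))))" .
      qed
      also have "\<dots> = (\<Sum>k'=1..m. \<Sum>j=1..i. \<Sum>k=1..m. \<Sum>s=1..nk k. D k' j * (f k * (C k' (i-j+1) k s * L^(nk k - s))))"
        apply (rule trans[OF sum.swap])
        apply (rule sum.cong[OF refl])
        apply (rule sum.swap)
        done
      also have "\<dots> = (\<Sum>k'=1..m. \<Sum>j=1..i. D k' j * (\<Sum>k=1..m. f k * (\<Sum>s=1..nk k. C k' (i-j+1) k s * L^(nk k - s))))"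
        by (simp only: sum_distrib_left)
      finally show ?thesis .
    qed
    also have "\<dots> = (\<Sum>k'=1..m. - (f k' * (\<Sum>j=1..i. D k' j * L^(nk k' + i - j))))"
    proof (rule sum.cong[OF refl])
      fix k' assume k': "k' \<in> {1..m}"
      have "(\<Sum>j=1..i. D k' j * (\<Sum>k=1..m. f k * (\<Sum>s=1..nk k. C k' (i-j+1) k s * L^(nk k - s))))
          = (\<Sum>j=1..i. D k' j * (- (f k' * L^(nk k' + i - j))))"
      proof (rule sum.cong[OF refl])
        fix j assume j: "j \<in> {1..i}"
        show "D k' j * (\<Sum>k=1..m. f k * (\<Sum>s=1..nk k. C k' (i-j+1) k s * L^(nk k - s)))
          = D k' j * (- (f k' * L^(nk k' + i - j)))" unfolding midC[OF k' j] ..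
      qed
      also have "\<dots> = - (f k' * (\<Sum>j=1..i. D k' j * L^(nk k' + i - j)))"
        by (simp add: sum_distrib_left sum_negf mult_ac)
      finally show "(\<Sum>j=1..i. D k' j * (\<Sum>k=1..m. f k * (\<Sum>s=1..nk k. C k' (i-j+1) k s * L^(nk k - s))))
          = - (f k' * (\<Sum>j=1..i. D k' j * L^(nk k' + i - j)))" .
    qed
    finally have mid': "(\<Sum>k=1..m. f k * (\<Sum>s=1..nk k. (\<Sum>k'=1..m. \<Sum>j=1..i. D k' j * C k' (i-j+1) k s) * L^(nk k - s)))
        = - (\<Sum>k=1..m. f k * (\<Sum>j=1..i. D k j * L^(nk k + i - j)))"
      by (simp add: sum_negf)
    have re: "(\<Sum>j=1..i. D k j * L^(nk k + i - j)) + (\<Sum>s=1..nk k. R k s * L^(nk k - s)) = L^i * W k"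
      if "k \<in> {1..m}" for k
      unfolding R_def W_def by (rule reindex) (use alpha that i in force)
    have "(\<Sum>k=1..m. f k * (\<Sum>s=1..nk k. v k s * L^(nk k - s)))
       = (\<Sum>k=1..m. f k * (Ll^i * W k)) + (\<Sum>k=1..m. f k * (\<Sum>s=1..nk k. (\<Sum>k'=1..m. \<Sum>j=1..i. D k' j * C k' (i-j+1) k s) * L^(nk k - s)))
         - (\<Sum>k=1..m. f k * (\<Sum>s=1..nk k. R k s * L^(nk k - s)))"
      unfolding v_def W_def Ll_def
      by (simp add: algebra_simps sum.distrib sum_subtractf sum_distrib_left)
    also have "\<dots> = (\<Sum>k=1..m. f k * (Ll^i * W k)) - (\<Sum>k=1..m. f k * ((\<Sum>j=1..i. D k j * L^(nk k + i - j)) + (\<Sum>s=1..nk k. R k s * L^(nk k - s))))"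
      unfolding mid' by (simp add: algebra_simps sum.distrib)
    also have "\<dots> = (\<Sum>k=1..m. f k * (Ll^i * W k)) - (\<Sum>k=1..m. f k * (L^i * W k))"
      using re by simp
    also have "\<dots> = (Ll^i - L^i) * (\<Sum>k=1..m. f k * W k)"
      by (simp add: algebra_simps sum_distrib_left sum_subtractf)
    finally show "(\<Sum>k=1..m. \<phi> k (p (Lam t)) (p (Mu t)) * (\<Sum>s=1..nk k. v k s * p (Lam t)^(nk k - s))) = 0"
      using Wz unfolding f_def L_def by simp
  qed
  then have "v k s = 0" using nondeg p k s by blast
  then show ?thesis unfolding v_def R_def D_def C_def by simp
qed

lemma bracket_zero:
  assumes p: "p \<in> M" and l: "l \<in> {1..n}" and ka: "ka \<in> {1..m}" "sa \<in> {1..nk ka}"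
    and kb: "kb \<in> {1..m}" "sb \<in> {1..nk kb}"
  shows "pd (Mu l) (h ka sa) p * pd (Lam l) (h kb sb) p - pd (Lam l) (h ka sa) p * pd (Mu l) (h kb sb) p = 0"
proof -
  define u where "u k s = pd (Mu l) (h k s) p" for k s
  define w where "w k s = pd (Lam l) (h k s) p" for k s
  define A where "A x t = (\<Sum>k=1..m. \<phi> k (p (Lam t)) (p (Mu t)) * (\<Sum>s=1..nk k. x k s * p (Lam t)^(nk k - s)))"
    for x :: "nat \<Rightarrow> nat \<Rightarrow> real" and t
  have Au: "A u t = 0" if "t \<in> {1..n}" "t \<noteq> l" for t
    using W_zero[OF p l _ that, of "Mu l"] unfolding A_def u_def by simp
  have Aw: "A w t = 0" if "t \<in> {1..n}" "t \<noteq> l" for t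
    using W_zero[OF p l _ that, of "Lam l"] unfolding A_def w_def by simp
  define G where "G = A u l"
  define E where "E = A w l"
  have lin: "A (\<lambda>k s. E * u k s - G * w k s) t = E * A u t - G * A w t" for t
    unfolding A_def by (simp add: algebra_simps sum_subtractf sum_distrib_left)
  have "\<forall>t\<in>{1..n}. A (\<lambda>k s. E * u k s - G * w k s) t = 0"
  proof
    fix t assume t: "t \<in> {1..n}"
    show "A (\<lambda>k s. E * u k s - G * w k s) t = 0"
      unfolding lin using Au[OF t] Aw[OF t] by (cases "t = l") (auto simp: G_def E_def)
  qed
  then have EG: "E * u k s = G * w k s" if "k \<in> {1..m}" "s \<in> {1..nk k}" for k s
    using nondeg p that unfolding A_def by fastforce
  define Q where "Q = u ka sa * w kb sb - w ka sa * u kb sb"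
  have "E * Q = (E * u ka sa) * w kb sb - w ka sa * (E * u kb sb)" by (simp add: Q_def algebra_simps)
  also have "\<dots> = (G * w ka sa) * w kb sb - w ka sa * (G * w kb sb)" using EG[OF ka] EG[OF kb] by simp
  also have "\<dots> = 0" by (simp add: algebra_simps)
  finally have "E * Q = 0" .
  have "G * Q = u ka sa * (G * w kb sb) - (G * w ka sa) * u kb sb" by (simp add: Q_def algebra_simps)
  also have "\<dots> = u ka sa * (E * u kb sb) - (E * u ka sa) * u kb sb" using EG[OF ka] EG[OF kb] by simp
  also have "\<dots> = 0" by (simp add: algebra_simps)
  finally have "G * Q = 0" .
  note \<open>E * Q = 0\<close> \<open>G * Q = 0\<close>
  moreover have "Q = 0" if "E = 0" "G = 0"
  proof -
    have "\<forall>t\<in>{1..n}. A u t = 0"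
    proof
      fix t assume "t \<in> {1..n}" then show "A u t = 0" using Au that G_def by (cases "t = l") auto
    qed
    then have "u k s = 0" if "k \<in> {1..m}" "s \<in> {1..nk k}" for k s
      using nondeg p that unfolding A_def by fastforce
    then show ?thesis unfolding Q_def using ka kb by simp
  qed
  ultimately have "Q = 0" by (metis mult_eq_0_iff)
  then show ?thesis unfolding Q_def u_def w_def .
qed

lemma contr_h:
  assumes p: "p \<in> M" and k: "k \<in> {1..m}" and s0: "s0 \<in> {1..nk k}" and i: "i \<le> \<alpha>"
  shows "contr (coords n m \<alpha>) (pis (coords n m \<alpha>) n m h i) (h k s0) x p
     = (if s0+i \<le> nk k then Xf (coords n m \<alpha>) n h k (s0+i) x p else 0)"
proof (cases x)
  case (Lam l)
  show ?thesis
  proof (cases "l \<in> {1..n}")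
    case True
    have "contr (coords n m \<alpha>) (pis (coords n m \<alpha>) n m h i) (h k s0) x p
      = p (Lam l)^i * pd (Mu l) (h k s0) p + (\<Sum>k'=1..m. \<Sum>j=1..i. pd (Mu l) (h k' j) p * pd (Cc k' (i-j+1)) (h k s0) p)"
      unfolding contr_pis[OF i] Lam using True by (simp add: Xf_Lam ite_simps sum.delta sum.delta')
    also have "\<dots> = (if s0+i \<le> nk k then pd (Mu l) (h k (s0+i)) p else 0)"
      by (rule chain[OF p True _ i k s0]) simp
    finally show ?thesis using True by (simp add: Lam Xf_Lam)
  next
    case False
    then show ?thesis unfolding contr_pis[OF i] Lam by (auto simp: Xf_Lam ite_simps sum.delta sum.delta')
  qed
next
  case (Mu l)
  show ?thesis
  proof (cases "l \<in> {1..n}")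
    case True
    have "contr (coords n m \<alpha>) (pis (coords n m \<alpha>) n m h i) (h k s0) x p
      = - (p (Lam l)^i * pd (Lam l) (h k s0) p + (\<Sum>k'=1..m. \<Sum>j=1..i. pd (Lam l) (h k' j) p * pd (Cc k' (i-j+1)) (h k s0) p))"
      unfolding contr_pis[OF i] Mu using True by (simp add: Xf_Mu ite_simps sum.delta sum.delta' sum_negf)
    also have "\<dots> = - (if s0+i \<le> nk k then pd (Lam l) (h k (s0+i)) p else 0)"
      by (subst chain[OF p True _ i k s0]) simp_all
    finally show ?thesis using True by (simp add: Mu Xf_Mu)
  next
    case False
    then show ?thesis unfolding contr_pis[OF i] Mu by (auto simp: Xf_Mu ite_simps sum.delta sum.delta')
  qed
next
  case (Cc a b)
  have br: "(\<Sum>y\<in>coords n m \<alpha>. Xf (coords n m \<alpha>) n h k' j y p * pd y (h k s0) p) = 0"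
    if "k' \<in> {1..m}" "j \<in> {1..i}" for k' j
  proof -
    have "j \<in> {1..nk k'}" using that alpha i by force
    then show ?thesis unfolding Xf_pairing
      by (intro sum.neutral ballI bracket_zero[OF p _ that(1) _ k s0]) auto
  qed
  have "contr (coords n m \<alpha>) (pis (coords n m \<alpha>) n m h i) (h k s0) x p = 0"
    unfolding contr_pis[OF i] Cc
    by (auto simp: Xf_Cc br intro!: sum.neutral)
  then show ?thesis by (simp add: Cc Xf_Cc)
qed

lemma contr_coord:
  assumes k: "k \<in> {1..m}" and q: "q \<in> {1..\<alpha>}" and s: "s \<le> \<alpha>"
  shows "contr (coords n m \<alpha>) (pis (coords n m \<alpha>) n m h s) (\<lambda>p. p (Cc k q)) x p
     = (if q \<le> s then Xf (coords n m \<alpha>) n h k (s - q + 1) x p else 0)"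
proof -
  have "contr (coords n m \<alpha>) (pis (coords n m \<alpha>) n m h s) (\<lambda>p. p (Cc k q)) x p
     = (\<Sum>k'=1..m. \<Sum>j=1..s. if k' = k \<and> j = s + 1 - q then Xf (coords n m \<alpha>) n h k' j x p else 0)"
    unfolding contr_pis[OF s] pd_coord
    apply (simp add: ite_simps sum.delta Xf_Cc cong: if_cong)
    apply (intro sum.cong refl)
    apply auto
    done
  also have "\<dots> = (\<Sum>k'=1..m. if k' = k then (\<Sum>j=1..s. if j = s + 1 - q then Xf (coords n m \<alpha>) n h k' j x p else 0) else 0)"
    by (intro sum.cong refl) auto
  also have "\<dots> = (\<Sum>j=1..s. if j = s + 1 - q then Xf (coords n m \<alpha>) n h k j x p else 0)"
    using k by (simp add: sum.delta)
  also have "\<dots> = (if q \<le> s then Xf (coords n m \<alpha>) n h k (s - q + 1) x p else 0)"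
    using q by (auto simp: sum.delta Suc_diff_le)
  finally show ?thesis .
qed

lemma chain_step:
  assumes p: "p \<in> M" and k: "k \<in> {1..m}" and i: "i \<le> \<alpha>" and r: "r \<in> {1..nk k}"
  shows "contr (coords n m \<alpha>) (pis (coords n m \<alpha>) n m h i) (Hext h k (- int i + int r)) x p
     = Xf (coords n m \<alpha>) n h k r x p"
proof (cases "r \<le> i")
  case True
  have "Hext h k (- int i + int r) = (\<lambda>p. p (Cc k (i - r + 1)))"
  proof -
    have "1 - (- int i + int r) = int (i - r + 1)" using True by simp
    then have "nat (1 - (- int i + int r)) = i - r + 1" by (simp only: nat_int)
    then show ?thesis using True unfolding Hext_def by auto
  qed
  moreover have "i - r + 1 \<in> {1..\<alpha>}" using True i r by auto
  ultimately show ?thesis using contr_coord[OF k _ i] True r by auto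
next
  case False
  have "Hext h k (- int i + int r) = h k (r - i)"
    using False unfolding Hext_def by (auto simp: of_nat_diff nat_diff_distrib)
  moreover have "r - i \<in> {1..nk k}" using False r by auto
  ultimately show ?thesis using contr_h[OF p k _ i] False r by auto
qed

lemma chain_end:
  assumes p: "p \<in> M" and k: "k \<in> {1..m}" and j: "1 \<le> j" "j \<le> \<alpha>"
  shows "contr (coords n m \<alpha>) (pis (coords n m \<alpha>) n m h j) (Hext h k (- int j + int (nk k) + 1)) x p = 0"
proof -
  have a: "\<alpha> \<le> nk k" using alpha k by blast
  have "Hext h k (- int j + int (nk k) + 1) = h k (nk k + 1 - j)"
  proof -
    have "- int j + int (nk k) + 1 = int (nk k + 1 - j)" using j a by simp
    then have "nat (- int j + int (nk k) + 1) = nk k + 1 - j" by (simp only: nat_int)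
    then show ?thesis using j a unfolding Hext_def by auto
  qed
  moreover have "nk k + 1 - j \<in> {1..nk k}" using j a by auto
  ultimately show ?thesis using contr_h[OF p k _ j(2)] j a by auto
qed

lemma chain_start:
  assumes k: "k \<in> {1..m}" and i: "i < \<alpha>"
  shows "contr (coords n m \<alpha>) (pis (coords n m \<alpha>) n m h i) (Hext h k (- int i)) x p = 0"
proof -
  have "Hext h k (- int i) = (\<lambda>p. p (Cc k (i + 1)))"
    unfolding Hext_def by (auto intro!: ext simp: nat_add_distrib)
  moreover have "i + 1 \<in> {1..\<alpha>}" using i by auto
  ultimately show ?thesis using contr_coord[OF k _ ] i by auto
qed

end

lemma card_pairs: "card {(i, j). i < j \<and> j \<le> (a::nat)} = (a + 1) choose 2"
proof (induction a)
  case 0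
  have e: "{(i, j). i < j \<and> j \<le> (0::nat)} = {}" by auto
  show ?case unfolding e by simp
next
  case (Suc a)
  have eq: "{(i, j). i < j \<and> j \<le> Suc a} = {(i, j). i < j \<and> j \<le> a} \<union> (\<lambda>i. (i, Suc a)) ` {..a}"
    by auto
  have fin: "finite {(i, j). i < j \<and> j \<le> (a::nat)}"
    by (rule finite_subset[of _ "{..a} \<times> {..a}"]) auto
  have "card {(i, j). i < j \<and> j \<le> Suc a} = card {(i, j). i < j \<and> j \<le> a} + card ((\<lambda>i. (i, Suc a)) ` {..a})"
    unfolding eq by (rule card_Un_disjoint) (use fin in auto)
  also have "card ((\<lambda>i. (i, Suc a)) ` {..a}) = Suc a"
    by (subst card_image) (auto simp: inj_on_def)
  finally show ?case using Suc by (simp add: numeral_2_eq_2)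
qed


theorem corollary14:
  fixes n m \<alpha> :: nat and nk :: "nat \<Rightarrow> nat"
    and \<phi> :: "nat \<Rightarrow> real \<Rightarrow> real \<Rightarrow> real"
    and h :: "nat \<Rightarrow> nat \<Rightarrow> point \<Rightarrow> real"
    and M :: "point set"
  assumes "n \<ge> 1" and "m \<ge> 1"
    and nk_pos: "\<forall>k\<in>{1..m}. nk k \<ge> 1"
    and nk_sum: "(\<Sum>k=1..m. nk k) = n"
    and alpha: "1 \<le> \<alpha>" "\<forall>k\<in>{1..m}. \<alpha> \<le> nk k"
    and phi_smooth: "\<forall>k\<in>{0..m}. smooth2 (\<phi> k)"
    and phi_m: "\<forall>l u. \<phi> m l u = 1"
    and M_open: "coord_open (coords n m \<alpha>) M"
    and h_smooth: "\<forall>k\<in>{1..m}. \<forall>i\<in>{1..nk k}. smooth_on (coords n m \<alpha>) M (h k i)"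
    and curve: "\<forall>p\<in>M. \<forall>j\<in>{1..n}.
        \<phi> 0 (p (Lam j)) (p (Mu j))
        + (\<Sum>k=1..m. \<phi> k (p (Lam j)) (p (Mu j)) *
             psi (nk k) \<alpha> (\<lambda>i. p (Cc k i)) (\<lambda>i. h k i p) (p (Lam j))) = 0"
    and nondeg: "\<forall>p\<in>M. \<forall>v :: nat \<Rightarrow> nat \<Rightarrow> real.
        (\<forall>j\<in>{1..n}. (\<Sum>k=1..m. \<phi> k (p (Lam j)) (p (Mu j)) *
             (\<Sum>i=1..nk k. v k i * (p (Lam j)) ^ (nk k - i))) = 0)
        \<longrightarrow> (\<forall>k\<in>{1..m}. \<forall>i\<in>{1..nk k}. v k i = 0)"
  shows "(\<forall>k\<in>{1..m}. \<forall>i j. i < j \<and> j \<le> \<alpha> \<longrightarrow>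
      (\<forall>p\<in>M. \<forall>x.
         contr (coords n m \<alpha>) (pis (coords n m \<alpha>) n m h i) (Hext h k (- int i)) x p = 0
       \<and> (\<forall>r\<in>{1..nk k}.
            contr (coords n m \<alpha>) (pis (coords n m \<alpha>) n m h i) (Hext h k (- int i + int r)) x p
              = Xf (coords n m \<alpha>) n h k r x p
          \<and> contr (coords n m \<alpha>) (pis (coords n m \<alpha>) n m h j) (Hext h k (- int j + int r)) x p
              = Xf (coords n m \<alpha>) n h k r x p)
       \<and> contr (coords n m \<alpha>) (pis (coords n m \<alpha>) n m h j) (Hext h k (- int j + int (nk k) + 1)) x p = 0))
    \<and> card {(i, j). i < j \<and> j \<le> \<alpha>} = (\<alpha> + 1) choose 2"
  proof -
  show ?thesis
  proof (intro conjI)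
    show "card {(i, j). i < j \<and> j \<le> \<alpha>} = (\<alpha> + 1) choose 2" by (rule card_pairs)
  next
    show "\<forall>k\<in>{1..m}. \<forall>i j. i < j \<and> j \<le> \<alpha> \<longrightarrow>
      (\<forall>p\<in>M. \<forall>x.
         contr (coords n m \<alpha>) (pis (coords n m \<alpha>) n m h i) (Hext h k (- int i)) x p = 0
       \<and> (\<forall>r\<in>{1..nk k}.
            contr (coords n m \<alpha>) (pis (coords n m \<alpha>) n m h i) (Hext h k (- int i + int r)) x p
              = Xf (coords n m \<alpha>) n h k r x p
          \<and> contr (coords n m \<alpha>) (pis (coords n m \<alpha>) n m h j) (Hext h k (- int j + int r)) x p
              = Xf (coords n m \<alpha>) n h k r x p)
       \<and> contr (coords n m \<alpha>) (pis (coords n m \<alpha>) n m h j) (Hext h k (- int j + int (nk k) + 1)) x p = 0)"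
    proof (intro ballI allI impI)
      fix k i j p x assume k: "k \<in> {1..m}" and ij: "i < j \<and> j \<le> \<alpha>" and p: "p \<in> M"
      have s1: "contr (coords n m \<alpha>) (pis (coords n m \<alpha>) n m h i) (Hext h k (- int i)) x p = 0"
        using chain_start[OF alpha(2) M_open h_smooth curve nondeg k] ij by auto
      have s2: "contr (coords n m \<alpha>) (pis (coords n m \<alpha>) n m h i) (Hext h k (- int i + int r)) x p
              = Xf (coords n m \<alpha>) n h k r x p" if "r \<in> {1..nk k}" for r
        using chain_step[OF alpha(2) M_open h_smooth curve nondeg p k _ that] ij by auto
      have s3: "contr (coords n m \<alpha>) (pis (coords n m \<alpha>) n m h j) (Hext h k (- int j + int r)) x p
              = Xf (coords n m \<alpha>) n h k r x p" if "r \<in> {1..nk k}" for r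
        using chain_step[OF alpha(2) M_open h_smooth curve nondeg p k _ that] ij by auto
      have s4: "contr (coords n m \<alpha>) (pis (coords n m \<alpha>) n m h j) (Hext h k (- int j + int (nk k) + 1)) x p = 0"
        using chain_end[OF alpha(2) M_open h_smooth curve nondeg p k] ij by auto
      show "contr (coords n m \<alpha>) (pis (coords n m \<alpha>) n m h i) (Hext h k (- int i)) x p = 0
       \<and> (\<forall>r\<in>{1..nk k}.
            contr (coords n m \<alpha>) (pis (coords n m \<alpha>) n m h i) (Hext h k (- int i + int r)) x p
              = Xf (coords n m \<alpha>) n h k r x p
          \<and> contr (coords n m \<alpha>) (pis (coords n m \<alpha>) n m h j) (Hext h k (- int j + int r)) x p
              = Xf (coords n m \<alpha>) n h k r x p)
       \<and> contr (coords n m \<alpha>) (pis (coords n m \<alpha>) n m h j) (Hext h k (- int j + int (nk k) + 1)) x p = 0"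
        using s1 s2 s3 s4 by blast
    qed
  qed
qed

end
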